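(* Fix $\hat P_0\in\mathbb S^n_+$. Let $\mathcal C(\hat P_0)$ be the set of all matrices $\hat P_i$, $i\in\mathbb Z_+$, generated by the inexact value iteration $\hat P_{i+1}=\mathcal R(\hat P_i,S)+\Delta_i$ started from $\hat P_0$, over all disturbance sequences $\{\Delta_i\}_{i\ge0}\subset\mathbb S^n$ with $\sup_{i}\|\Delta_i\|_2<\lambda_{\min}(S)$. Then the closure $\overline{\mathcal C(\hat P_0)}$ is compact.
   Context: Let $n,m\ge 1$, $A\in\mathbb R^{n\times n}$, $B\in\mathbb R^{n\times m}$, $S\in\mathbb S^n_{++}$, $R\in\mathbb S^m_{++}$, with $(A,B)$ stabilizable. Here $\mathbb S^n$, $\mathbb S^n_+$, $\mathbb S^n_{++}$ denote the real symmetric, symmetric positive semidefinite, and symmetric positive definite $n\times n$ matrices; $\|\cdot\|_2$ is the spectral norm; $\lambda_{\min}$ is the smallest eigenvalue. For $P\in\mathbb S^n_+$ and $S'\in\mathbb S^n$, the Riccati operator is $\mathcal R(P,S')=A^\top PA-A^\top PB(R+B^\top PB)^{-1}B^\top PA+S'$. *)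

theory Defs
  imports "HOL-Analysis.Analysis"
begin

definition sym_mat :: "real^'n^'n \<Rightarrow> bool" where
  "sym_mat M \<longleftrightarrow> transpose M = M"

definition psd_mat :: "real^'n^'n \<Rightarrow> bool" where
  "psd_mat M \<longleftrightarrow> sym_mat M \<and> (\<forall>x. 0 \<le> x \<bullet> (M *v x))"

definition pd_mat :: "real^'n^'n \<Rightarrow> bool" where
  "pd_mat M \<longleftrightarrow> sym_mat M \<and> (\<forall>x. x \<noteq> 0 \<longrightarrow> 0 < x \<bullet> (M *v x))"

definition spec_norm :: "real^'n^'m \<Rightarrow> real" where
  "spec_norm M = onorm (\<lambda>x. M *v x)"

definition lambda_min :: "real^'n^'n \<Rightarrow> real" where
  "lambda_min M = Min {l. \<exists>v. v \<noteq> 0 \<and> M *v v = l *\<^sub>R v}"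

definition cplx_mat :: "real^'n^'n \<Rightarrow> complex^'n^'n" where
  "cplx_mat M = (\<chi> i j. complex_of_real (M $ i $ j))"

definition is_eigenvalue :: "real^'n^'n \<Rightarrow> complex \<Rightarrow> bool" where
  "is_eigenvalue M l \<longleftrightarrow> (\<exists>v. v \<noteq> 0 \<and> cplx_mat M *v v = l *s v)"

definition schur_stable :: "real^'n^'n \<Rightarrow> bool" where
  "schur_stable M \<longleftrightarrow> (\<forall>l. is_eigenvalue M l \<longrightarrow> cmod l < 1)"

definition stabilizable :: "real^'n^'n \<Rightarrow> real^'m^'n \<Rightarrow> bool" where
  "stabilizable A B \<longleftrightarrow> (\<exists>K :: real^'n^'m. schur_stable (A - B ** K))"

definition riccati ::
  "real^'n^'n \<Rightarrow> real^'m^'n \<Rightarrow> real^'m^'m \<Rightarrow> real^'n^'n \<Rightarrow> real^'n^'n \<Rightarrow> real^'n^'n" where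
  "riccati A B R P S' =
     transpose A ** P ** A
     - transpose A ** P ** B ** matrix_inv (R + transpose B ** P ** B) ** transpose B ** P ** A
     + S'"

primrec inexact_vi ::
  "real^'n^'n \<Rightarrow> real^'m^'n \<Rightarrow> real^'m^'m \<Rightarrow> real^'n^'n \<Rightarrow> real^'n^'n
   \<Rightarrow> (nat \<Rightarrow> real^'n^'n) \<Rightarrow> nat \<Rightarrow> real^'n^'n" where
  "inexact_vi A B R S P0 D 0 = P0"
| "inexact_vi A B R S P0 D (Suc i) = riccati A B R (inexact_vi A B R S P0 D i) S + D i"

definition reach_set ::
  "real^'n^'n \<Rightarrow> real^'m^'n \<Rightarrow> real^'m^'m \<Rightarrow> real^'n^'n \<Rightarrow> real^'n^'n \<Rightarrow> (real^'n^'n) set" where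
  "reach_set A B R S P0 =
    {P. \<exists>D i. (\<forall>k. sym_mat (D k)) \<and> bdd_above (range (\<lambda>k. spec_norm (D k)))
            \<and> (SUP k. spec_norm (D k)) < lambda_min S
            \<and> P = inexact_vi A B R S P0 D i}"

end

theory Submission
  imports Defs "Jordan_Normal_Form.Spectral_Radius"
begin


no_notation Matrix.vec_index (infixl \<open>$\<close> 100)

primrec mpow :: "real^'n^'n \<Rightarrow> nat \<Rightarrow> real^'n^'n" where
  "mpow M 0 = Finite_Cartesian_Product.mat 1"
| "mpow M (Suc k) = mpow M k ** M"

lemma mpow_smult: "mpow (c *\<^sub>R M) k = (c^k) *\<^sub>R mpow M k"
  by (induction k) (auto simp: matrix_scalar_ac scalar_matrix_assoc)

lemma smult_mat_mult_vec_jnf: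
  assumes "A \<in> carrier_mat n n" "v \<in> carrier_vec n"
  shows "(c \<cdot>\<^sub>m A) *\<^sub>v v = c \<cdot>\<^sub>v (A *\<^sub>v v)"
  using assms by (intro eq_vecI) (auto simp: scalar_prod_def sum_distrib_left mult.assoc)

lemma stable_decay:
  fixes M :: "real^'n::finite^'n"
  assumes st: "schur_stable M"
  shows "\<exists>c r. 0 < r \<and> r < 1 \<and> (\<forall>k i j. \<bar>mpow M k $ i $ j\<bar> \<le> c * r^k)"
proof -
  define N where "N = CARD('n)"
  obtain h where h: "bij_betw h {0..<N} (UNIV::'n set)"
    using ex_bij_betw_nat_finite[of "UNIV::'n set"] unfolding N_def by auto
  have N0: "N > 0" unfolding N_def by simp
  define cm where "cm X = Matrix.mat N N (\<lambda>(i,j). complex_of_real (X $ h i $ h j))" for X :: "real^'n^'n"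
  have cm_car: "cm X \<in> carrier_mat N N" for X unfolding cm_def by simp
  have cm_dim[simp]: "dim_row (cm X) = N" "dim_col (cm X) = N" for X unfolding cm_def by simp_all
  have cm_mult: "cm (X ** Y) = cm X * cm Y" for X Y
  proof (rule eq_matI)
    fix i j assume ij: "i < dim_row (cm X * cm Y)" "j < dim_col (cm X * cm Y)"
    hence i: "i < N" and j: "j < N" using cm_car by auto
    have "(cm X * cm Y) $$ (i,j) = (\<Sum>k\<in>{0..<N}. complex_of_real (X $ h i $ h k * Y $ h k $ h j))"
      using i j cm_car unfolding cm_def by (simp add: scalar_prod_def)
    also have "\<dots> = complex_of_real (\<Sum>k\<in>UNIV. X $ h i $ k * Y $ k $ h j)"
      unfolding of_real_sum[symmetric] using sum.reindex_bij_betw[OF h, of "\<lambda>k. X $ h i $ k * Y $ k $ h j"] by simp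
    finally show "cm (X ** Y) $$ (i, j) = (cm X * cm Y) $$ (i, j)"
      using i j unfolding cm_def by (simp add: matrix_matrix_mult_def)
  qed (auto simp: cm_def)
  have hinj: "h i = h j \<longleftrightarrow> i = j" if "i < N" "j < N" for i j
    using h that unfolding bij_betw_def inj_on_def by auto
  have cm_one: "cm (Finite_Cartesian_Product.mat 1) = 1\<^sub>m N"
    by (rule eq_matI) (auto simp: cm_def Finite_Cartesian_Product.mat_def hinj)
  have cm_pow: "cm (mpow X k) = cm X ^\<^sub>m k" for X k
    by (induction k) (simp_all add: cm_one cm_mult)
  have cm_smult: "cm (c *\<^sub>R X) = complex_of_real c \<cdot>\<^sub>m cm X" for c X
    by (rule eq_matI) (auto simp: cm_def)
  have eig: "is_eigenvalue X l" if "eigenvalue (cm X) l" for X l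
  proof -
    from that obtain v where v: "v \<in> carrier_vec N" "v \<noteq> 0\<^sub>v N" "cm X *\<^sub>v v = l \<cdot>\<^sub>v v"
      unfolding eigenvalue_def eigenvector_def using cm_car by auto
    define g where "g = inv_into {0..<N} h"
    have gh: "g (h i) = i" if "i < N" for i using h that unfolding g_def bij_betw_def by auto
    have hsurj: "a \<in> h ` {0..<N}" for a using h unfolding bij_betw_def by auto
    have hg: "h (g a) = a" "g a < N" for a
      using f_inv_into_f[OF hsurj[of a]] inv_into_into[OF hsurj[of a]] unfolding g_def by auto
    define w :: "complex^'n" where "w = (\<chi> a. vec_index v (g a))"
    have "cplx_mat X *v w = l *s w"
    proof (rule Finite_Cartesian_Product.vec_eq_iff[THEN iffD2], rule allI)
      fix a
      have "(cplx_mat X *v w) $ a = (\<Sum>b\<in>UNIV. complex_of_real (X $ a $ b) * vec_index v (g b))"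
        by (simp add: matrix_vector_mult_def cplx_mat_def w_def)
      also have "\<dots> = (\<Sum>k\<in>{0..<N}. complex_of_real (X $ a $ h k) * vec_index v k)"
        using sum.reindex_bij_betw[OF h, of "\<lambda>b. complex_of_real (X $ a $ b) * vec_index v (g b)"]
        by (simp add: gh)
      also have "\<dots> = vec_index (cm X *\<^sub>v v) (g a)"
        using hg[of a] v(1) by (simp add: cm_def scalar_prod_def mult.commute)
      also have "\<dots> = l * w $ a" using v(3) hg[of a] v(1) by (simp add: w_def)
      finally show "(cplx_mat X *v w) $ a = (l *s w) $ a" by simp
    qed
    moreover have "w \<noteq> 0"
    proof
      assume "w = 0"
      hence "vec_index v i = 0" if "i < N" for i using that gh
        by (metis (no_types, lifting) vec_lambda_beta w_def zero_index)
      hence "v = 0\<^sub>v N" using v(1) by (intro eq_vecI) auto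
      with v(2) show False by simp
    qed
    ultimately show ?thesis unfolding is_eigenvalue_def by blast
  qed
  let ?A = "cm M"
  define \<rho> where "\<rho> = spectral_radius ?A"
  obtain l where l: "l \<in> Spectral_Radius.spectrum ?A" "\<rho> = norm l"
    using spectral_radius_mem_max(1)[OF cm_car N0] unfolding \<rho>_def by auto
  have "\<rho> < 1" using l st eig unfolding schur_stable_def Spectral_Radius.spectrum_def by auto
  have "\<rho> \<ge> 0" using l by simp
  define r where "r = (\<rho> + 1) / 2"
  have r: "0 < r" "r < 1" "\<rho> < r" using \<open>\<rho> < 1\<close> \<open>\<rho> \<ge> 0\<close> unfolding r_def by auto
  define M' where "M' = (1/r) *\<^sub>R M"
  have MM': "M = r *\<^sub>R M'" using r unfolding M'_def by simp
  have "spectral_radius (cm M') < 1"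
  proof -
    obtain l' where l': "l' \<in> Spectral_Radius.spectrum (cm M')" "spectral_radius (cm M') = norm l'"
      using spectral_radius_mem_max(1)[OF cm_car N0] by auto
    then obtain v where v: "v \<in> carrier_vec N" "v \<noteq> 0\<^sub>v N" "cm M' *\<^sub>v v = l' \<cdot>\<^sub>v v"
      unfolding Spectral_Radius.spectrum_def eigenvalue_def eigenvector_def using cm_car by auto
    have "cm M *\<^sub>v v = (complex_of_real r * l') \<cdot>\<^sub>v v"
      unfolding MM' cm_smult using smult_mat_mult_vec_jnf[OF cm_car v(1)] v(3)
      by (simp add: smult_smult_assoc)
    hence "eigenvalue ?A (complex_of_real r * l')"
      unfolding eigenvalue_def eigenvector_def using v cm_car by auto
    hence "norm (complex_of_real r * l') \<le> \<rho>"
      using spectral_radius_mem_max(2)[OF cm_car N0] unfolding \<rho>_def Spectral_Radius.spectrum_def by auto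
    hence "r * norm l' \<le> \<rho>" using r by (simp add: norm_mult)
    hence "r * norm l' < r * 1" using r by linarith
    hence "norm l' < 1" using r by (simp only: mult_less_cancel_left_pos)
    thus ?thesis using l' r by simp
  qed
  from spectral_radius_jnf_norm_bound_less_1_upper_triangular[OF cm_car this]
  obtain c where c: "\<And>k. norm_bound (cm M' ^\<^sub>m k) c" by auto
  have "\<bar>mpow M k $ a $ b\<bar> \<le> c * r^k" for k a b
  proof -
    have hs: "x \<in> h ` {0..<N}" for x using h unfolding bij_betw_def by auto
    obtain i where i: "i < N" "a = h i" using hs[of a] by auto
    obtain j where j: "j < N" "b = h j" using hs[of b] by auto
    note ij = i(1) j(1) i(2) j(2)
    have "norm ((cm M' ^\<^sub>m k) $$ (i,j)) \<le> c" using c[of k] ij cm_car unfolding norm_bound_def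
      by simp
    hence "norm (complex_of_real ((1/r)^k * mpow M k $ a $ b)) \<le> c"
      unfolding cm_pow[symmetric] M'_def mpow_smult using ij unfolding cm_def by simp
    hence "\<bar>(1/r)^k * mpow M k $ a $ b\<bar> \<le> c" by (simp only: norm_of_real)
    hence "(1/r)^k * \<bar>mpow M k $ a $ b\<bar> \<le> c" using r by (simp add: abs_mult)
    hence "r^k * ((1/r)^k * \<bar>mpow M k $ a $ b\<bar>) \<le> r^k * c" using r by (intro mult_left_mono) auto
    thus ?thesis using r by (simp add: power_one_over mult.commute power_divide field_simps)
  qed
  thus ?thesis using r by blast
qed



lemma dot_tr: "(x::real^'n) \<bullet> (transpose A *v u) = (A *v x) \<bullet> u"
proof -
  have "x \<bullet> (transpose A *v u) = (u v* A) \<bullet> x" by (simp add: inner_commute)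
  also have "\<dots> = u \<bullet> (A *v x)" by (rule dot_lmul_matrix)
  finally show ?thesis by (simp add: inner_commute)
qed

lemma dot_tr2: "(x::real^'n) \<bullet> (u v* A) = (A *v x) \<bullet> u"
  using dot_tr[of x A u] by simp

lemma dot_tr': fixes A :: "real^'n^'m" shows "u \<bullet> (A *v x) = (transpose A *v u) \<bullet> x"
  using dot_tr[of u "transpose A" x] by simp

lemma dot_sym: "transpose M = M \<Longrightarrow> (u::real^'n) \<bullet> (M *v v) = (M *v u) \<bullet> v"
  using dot_tr[of u M v] by simp

lemma transpose_add': "transpose (X + Y) = transpose X + transpose (Y::real^'n^'m)"
  by (simp add: Finite_Cartesian_Product.vec_eq_iff transpose_def)

lemma transpose_diff': "transpose (X - Y) = transpose X - transpose (Y::real^'n^'m)"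
  by (simp add: Finite_Cartesian_Product.vec_eq_iff transpose_def)

lemma matrix_inv_props:
  fixes M :: "real^'n^'n"
  assumes "invertible M"
  shows "M ** matrix_inv M = Finite_Cartesian_Product.mat 1" "matrix_inv M ** M = Finite_Cartesian_Product.mat 1"
proof -
  have "\<exists>A'. M ** A' = Finite_Cartesian_Product.mat 1 \<and> A' ** M = Finite_Cartesian_Product.mat 1"
    using assms unfolding invertible_def by blast
  from someI_ex[OF this] show "M ** matrix_inv M = Finite_Cartesian_Product.mat 1" "matrix_inv M ** M = Finite_Cartesian_Product.mat 1"
    unfolding matrix_inv_def by auto
qed

lemma matrix_inv_sym:
  fixes M :: "real^'n^'n"
  assumes "invertible M" "transpose M = M"
  shows "transpose (matrix_inv M) = matrix_inv M"
proof -
  let ?X = "matrix_inv M"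
  have "transpose (M ** ?X) = Finite_Cartesian_Product.mat 1" using matrix_inv_props(1)[OF assms(1)] by simp
  hence 1: "transpose ?X ** M = Finite_Cartesian_Product.mat 1" using assms(2) by (simp add: matrix_transpose_mul)
  have "transpose ?X = transpose ?X ** (M ** ?X)" using matrix_inv_props(1)[OF assms(1)] by simp
  also have "\<dots> = ?X" by (simp add: matrix_mul_assoc 1)
  finally show ?thesis .
qed

lemma ric_sym:
  fixes A :: "real^'n^'n" and B :: "real^'m^'n"
  assumes "transpose P = P" "transpose S' = S'" "transpose R = R"
    and inv: "invertible (R + transpose B ** P ** B)"
  shows "transpose (riccati A B R P S') = riccati A B R P S'"
proof -
  let ?M = "R + transpose B ** P ** B"
  have Ms: "transpose ?M = ?M" using assms(1,3)
    by (simp add: transpose_add' matrix_transpose_mul matrix_mul_assoc)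
  have Xs: "transpose (matrix_inv ?M) = matrix_inv ?M" by (rule matrix_inv_sym[OF inv Ms])
  show ?thesis unfolding riccati_def transpose_add' transpose_diff'
    using assms(1,2) Xs by (simp add: matrix_transpose_mul matrix_mul_assoc)
qed

lemma ric_identity:
  fixes A :: "real^'n^'n" and B :: "real^'m^'n" and R :: "real^'m^'m" and x :: "real^'n"
  assumes Ps: "transpose P = P" and Rs: "transpose R = R"
    and inv: "invertible (R + transpose B ** P ** B)"
  defines "M \<equiv> R + transpose B ** P ** B"
  defines "w \<equiv> matrix_inv M *v (transpose B *v (P *v (A *v x)))"
  shows "x \<bullet> (riccati A B R P S' *v x) + (z - w) \<bullet> (M *v (z - w))
         = (A *v x - B *v z) \<bullet> (P *v (A *v x - B *v z)) + z \<bullet> (R *v z) + x \<bullet> (S' *v x)"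
proof -
  define y where "y = A *v x"
  define g where "g = transpose B *v (P *v y)"
  define Mi where "Mi = matrix_inv M"
  have Ms: "transpose M = M" unfolding M_def using Ps Rs
    by (simp add: transpose_add' matrix_transpose_mul matrix_mul_assoc)
  have "M *v w = (M ** matrix_inv M) *v g" unfolding w_def g_def y_def by (simp only: matrix_vector_mul_assoc matrix_mul_assoc)
  hence Mw: "M *v w = g" by (simp add: matrix_inv_props(1)[OF inv[folded M_def]] matrix_vector_mul_lid)
  have r1: "x \<bullet> (riccati A B R P S' *v x) = y \<bullet> (P *v y) - g \<bullet> w + x \<bullet> (S' *v x)"
  proof -
    have "x \<bullet> ((transpose A ** P ** A) *v x) = y \<bullet> (P *v y)"
      unfolding y_def by (simp add: matrix_vector_mul_assoc[symmetric] dot_tr dot_tr2)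
    moreover have "x \<bullet> ((transpose A ** P ** B ** matrix_inv (R + transpose B ** P ** B) ** transpose B ** P ** A) *v x) = g \<bullet> w"
    proof -
      have "x \<bullet> ((transpose A ** P ** B ** matrix_inv (R + transpose B ** P ** B) ** transpose B ** P ** A) *v x)
          = x \<bullet> (transpose A *v (P *v (B *v w)))"
        unfolding w_def M_def by (simp add: matrix_vector_mul_assoc[symmetric])
      also have "\<dots> = y \<bullet> (P *v (B *v w))" unfolding y_def by (simp add: dot_tr dot_tr2)
      also have "\<dots> = (P *v y) \<bullet> (B *v w)" using dot_sym[OF Ps] by simp
      also have "\<dots> = g \<bullet> w" unfolding g_def using dot_tr'[of "P *v y" B w] by simp
      finally show ?thesis .
    qed
    ultimately show ?thesis unfolding riccati_def
      by (simp add: matrix_vector_mult_diff_rdistrib matrix_vector_mult_add_rdistrib inner_diff_right inner_add_right)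
  qed
  have e1: "(A *v x - B *v z) \<bullet> (P *v (A *v x - B *v z)) = y \<bullet> (P *v y) - 2 * (z \<bullet> g) + (B *v z) \<bullet> (P *v (B *v z))"
  proof -
    have a: "y \<bullet> (P *v (B *v z)) = z \<bullet> g" unfolding g_def
      using dot_sym[OF Ps, of y "B *v z"] dot_tr'[of "P *v y" B z] by (simp add: inner_commute)
    have b: "(B *v z) \<bullet> (P *v y) = z \<bullet> g" unfolding g_def
      using dot_tr'[of "P *v y" B z] by (simp add: inner_commute)
    show ?thesis unfolding y_def[symmetric]
      using a b by (simp add: matrix_vector_mult_diff_distrib inner_diff_left inner_diff_right)
  qed
  have e2: "z \<bullet> (M *v z) = z \<bullet> (R *v z) + (B *v z) \<bullet> (P *v (B *v z))"
    unfolding M_def by (simp add: matrix_vector_mult_add_rdistrib inner_add_right matrix_vector_mul_assoc[symmetric] dot_tr dot_tr2)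
  have e3: "(z - w) \<bullet> (M *v (z - w)) = z \<bullet> (M *v z) - 2 * (z \<bullet> g) + g \<bullet> w"
  proof -
    have "w \<bullet> (M *v z) = z \<bullet> g" using dot_sym[OF Ms, of w z] Mw by (simp add: inner_commute)
    moreover have "z \<bullet> (M *v w) = z \<bullet> g" using Mw by simp
    moreover have "w \<bullet> (M *v w) = g \<bullet> w" using Mw by (simp add: inner_commute)
    ultimately show ?thesis by (simp add: matrix_vector_mult_diff_distrib inner_diff_left inner_diff_right)
  qed
  show ?thesis using r1 e1 e2 e3 by linarith
qed


lemma quad_bound:
  fixes M :: "real^'n^'n"
  shows "\<bar>x \<bullet> (M *v x)\<bar> \<le> spec_norm M * (x \<bullet> x)"
proof -
  have bl: "bounded_linear (\<lambda>x. M *v x)" by (simp add: linear_linear matrix_vector_mul_linear)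
  have "\<bar>x \<bullet> (M *v x)\<bar> \<le> norm x * norm (M *v x)" by (rule Cauchy_Schwarz_ineq2)
  also have "\<dots> \<le> norm x * (spec_norm M * norm x)"
    unfolding spec_norm_def by (intro mult_left_mono onorm[OF bl]) auto
  also have "\<dots> = spec_norm M * (x \<bullet> x)" by (simp add: power2_norm_eq_inner[symmetric] power2_eq_square)
  finally show ?thesis .
qed

lemma spec_norm_nonneg: "0 \<le> spec_norm (M::real^'n^'m)"
  unfolding spec_norm_def by (rule onorm_pos_le) (simp add: linear_linear matrix_vector_mul_linear)

lemma lambda_min_le:
  fixes S :: "real^'n^'n"
  assumes Ss: "transpose S = S"
  shows "lambda_min S * (x \<bullet> x) \<le> x \<bullet> (S *v x)"
proof -
  define E where "E = {l. \<exists>v. v \<noteq> 0 \<and> S *v v = l *\<^sub>R v}"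
  define ev where "ev l = (SOME v. v \<noteq> 0 \<and> S *v v = l *\<^sub>R v)" for l
  have ev: "ev l \<noteq> 0" "S *v ev l = l *\<^sub>R ev l" if "l \<in> E" for l
    using someI_ex[of "\<lambda>v. v \<noteq> 0 \<and> S *v v = l *\<^sub>R v"] that unfolding E_def ev_def by auto
  have inj: "inj_on ev E"
  proof (rule inj_onI)
    fix a b assume ab: "a \<in> E" "b \<in> E" "ev a = ev b"
    hence "a *\<^sub>R ev a = b *\<^sub>R ev a" using ev by metis
    thus "a = b" using ev(1)[OF ab(1)] by simp
  qed
  have orth: "pairwise real_inner_class.orthogonal (ev ` E)"
  proof (clarsimp simp: pairwise_def)
    fix a b assume ab: "a \<in> E" "b \<in> E" "ev a \<noteq> ev b"
    hence "a \<noteq> b" by auto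
    have "a * (ev a \<bullet> ev b) = (S *v ev a) \<bullet> ev b" using ev(2)[OF ab(1)] by simp
    also have "\<dots> = ev a \<bullet> (S *v ev b)" using dot_sym[OF Ss, of "ev a" "ev b"] by simp
    also have "\<dots> = b * (ev a \<bullet> ev b)" using ev(2)[OF ab(2)] by simp
    finally have "(a - b) * (ev a \<bullet> ev b) = 0" by (simp add: algebra_simps)
    thus "real_inner_class.orthogonal (ev a) (ev b)" using \<open>a \<noteq> b\<close> unfolding real_inner_class.orthogonal_def by simp
  qed
  have "0 \<notin> ev ` E" using ev(1) by auto
  from pairwise_orthogonal_independent[OF orth this]
  have "finite (ev ` E)" by (rule finiteI_independent)
  hence finE: "finite E" using finite_imageD inj by blast
  define q where "q x = x \<bullet> (S *v x)" for x :: "real^'n"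
  have cq: "continuous_on (sphere 0 1) q" unfolding q_def
    by (intro continuous_intros linear_continuous_on) (simp add: linear_linear matrix_vector_mul_linear)
  have "sphere (0::real^'n) 1 \<noteq> {}" by simp
  from continuous_attains_inf[OF compact_sphere this cq]
  obtain u where u: "u \<in> sphere 0 1" "\<And>y. y \<in> sphere 0 1 \<Longrightarrow> q u \<le> q y" by blast
  define m where "m = q u"
  have nu: "norm u = 1" using u(1) by simp
  have uu: "u \<bullet> u = 1" using nu by (simp add: power2_norm_eq_inner[symmetric])
  have hom: "m * (x \<bullet> x) \<le> q x" for x
  proof (cases "x = 0")
    case True thus ?thesis by (simp add: q_def)
  next
    case False
    define v where "v = (1 / norm x) *\<^sub>R x"
    have "v \<in> sphere 0 1" using False unfolding v_def by simp
    hence "m \<le> q v" using u(2) unfolding m_def by blast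
    also have "q v = q x / (norm x)^2" unfolding v_def q_def
      by (simp add: matrix_vector_mult_scaleR power2_eq_square divide_simps)
    finally have "m * (norm x)^2 \<le> q x" using False by (simp add: divide_simps)
    thus ?thesis by (simp add: power2_norm_eq_inner)
  qed
  have Su: "S *v u = m *\<^sub>R u"
  proof -
    define w where "w = S *v u - m *\<^sub>R u"
    define b where "b = w \<bullet> w"
    define a where "a = q w - m * (w \<bullet> w)"
    have "u \<bullet> w = 0" unfolding w_def m_def q_def using uu
      by (simp add: inner_diff_right)
    hence wu: "w \<bullet> u = 0" by (simp add: inner_commute)
    have psi: "0 \<le> 2 * t * b + t^2 * a" for t
    proof -
      have H: "m * ((u + t *\<^sub>R w) \<bullet> (u + t *\<^sub>R w)) \<le> q (u + t *\<^sub>R w)" by (rule hom)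
      have E1: "q (u + t *\<^sub>R w) = m + 2 * t * ((S *v u) \<bullet> w) + t^2 * q w"
      proof -
        have "u \<bullet> (S *v w) = (S *v u) \<bullet> w" by (rule dot_sym[OF Ss])
        thus ?thesis unfolding q_def m_def
          by (simp add: matrix_vector_right_distrib matrix_vector_mult_scaleR inner_add_left inner_add_right
              algebra_simps power2_eq_square inner_commute[of w "S *v u"])
      qed
      have E2: "(u + t *\<^sub>R w) \<bullet> (u + t *\<^sub>R w) = 1 + t^2 * (w \<bullet> w)"
        using uu wu by (simp add: inner_add_left inner_add_right algebra_simps power2_eq_square inner_commute[of w u])
      have E3: "(S *v u) \<bullet> w = b"
      proof -
        have "(S *v u) \<bullet> w = (w + m *\<^sub>R u) \<bullet> w" unfolding w_def by simp
        also have "\<dots> = b" using wu by (simp add: b_def inner_add_left inner_commute[of u w])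
        finally show ?thesis .
      qed
      have "m * (1 + t^2 * (w \<bullet> w)) \<le> m + 2 * t * b + t^2 * q w"
        using H unfolding E1 E2 E3 .
      thus ?thesis unfolding a_def by (simp add: algebra_simps)
    qed
    have "b = 0"
    proof (rule ccontr)
      assume "b \<noteq> 0"
      hence bp: "b > 0" unfolding b_def by (simp add: order_less_le)
      define t where "t = - b / (\<bar>a\<bar> + 1)"
      have tn: "t < 0" unfolding t_def using bp by (simp add: divide_neg_pos)
      have "t^2 * a \<le> t^2 * \<bar>a\<bar>" by (intro mult_left_mono) auto
      moreover have "2 * t * b + t^2 * \<bar>a\<bar> = t * (2 * b + t * \<bar>a\<bar>)" by (simp add: algebra_simps power2_eq_square)
      moreover have "t * \<bar>a\<bar> > - b" 
      proof -
        have "t * \<bar>a\<bar> = - b * (\<bar>a\<bar> / (\<bar>a\<bar> + 1))" unfolding t_def by simp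
        moreover have "\<bar>a\<bar> / (\<bar>a\<bar> + 1) < 1" by simp
        have "b * (\<bar>a\<bar> / (\<bar>a\<bar> + 1)) < b * 1" using bp \<open>\<bar>a\<bar> / (\<bar>a\<bar> + 1) < 1\<close>
          by (rule mult_strict_left_mono[rotated])
        ultimately show ?thesis by linarith
      qed
      hence "2 * b + t * \<bar>a\<bar> > 0" using bp by linarith
      hence "t * (2 * b + t * \<bar>a\<bar>) < 0" using tn by (simp add: mult_neg_pos)
      ultimately have "2 * t * b + t^2 * a < 0" by linarith
      with psi[of t] show False by linarith
    qed
    hence "w = 0" unfolding b_def by simp
    thus ?thesis unfolding w_def by simp
  qed
  have "m \<in> E" unfolding E_def using Su nu by (intro CollectI exI[of _ u]) auto
  hence "lambda_min S \<le> m" unfolding lambda_min_def E_def[symmetric] using finE by simp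
  hence "lambda_min S * (x \<bullet> x) \<le> m * (x \<bullet> x)" by (intro mult_right_mono) auto
  also have "\<dots> \<le> x \<bullet> (S *v x)" using hom[of x] unfolding q_def .
  finally show ?thesis .
qed


lemma axis_quad: "axis i 1 \<bullet> ((P::real^'n^'n) *v axis j 1) = P $ i $ j"
  by (simp add: inner_axis' matrix_vector_mult_basis column_def)

lemma entry_bound:
  fixes P :: "real^'n^'n"
  assumes Ps: "transpose P = P" and pos: "\<And>x. 0 \<le> x \<bullet> (P *v x)"
    and up: "\<And>x. x \<bullet> (P *v x) \<le> G * (x \<bullet> x)"
  shows "\<bar>P $ i $ j\<bar> \<le> \<bar>G\<bar>"
proof -
  define a :: "real^'n" where "a = axis i 1"
  define b :: "real^'n" where "b = axis j 1"
  have ab: "a \<bullet> (P *v b) = P $ i $ j" unfolding a_def b_def by (rule axis_quad)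
  have ba: "b \<bullet> (P *v a) = P $ i $ j"
    using dot_sym[OF Ps, of b a] ab by (simp add: inner_commute)
  have q: "(a + s *\<^sub>R b) \<bullet> (P *v (a + s *\<^sub>R b)) = a \<bullet> (P *v a) + 2 * s * P $ i $ j + s^2 * (b \<bullet> (P *v b))" for s
    using ab ba by (simp add: matrix_vector_right_distrib matrix_vector_mult_scaleR inner_add_left inner_add_right
        algebra_simps power2_eq_square)
  have nn: "(a + s *\<^sub>R b) \<bullet> (a + s *\<^sub>R b) \<le> 4" if "\<bar>s\<bar> = 1" for s
  proof -
    have "norm (a + s *\<^sub>R b) \<le> norm a + norm (s *\<^sub>R b)" by (rule norm_triangle_ineq)
    also have "\<dots> = 2" using that unfolding a_def b_def by simp
    finally have "norm (a + s *\<^sub>R b) \<le> 2" .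
    hence "(norm (a + s *\<^sub>R b))^2 \<le> 2^2" by (intro power_mono) auto
    thus ?thesis by (simp add: power2_norm_eq_inner)
  qed
  have bd: "0 \<le> (a + s *\<^sub>R b) \<bullet> (P *v (a + s *\<^sub>R b)) \<and> (a + s *\<^sub>R b) \<bullet> (P *v (a + s *\<^sub>R b)) \<le> 4 * \<bar>G\<bar>"
    if "\<bar>s\<bar> = 1" for s
  proof
    show "0 \<le> (a + s *\<^sub>R b) \<bullet> (P *v (a + s *\<^sub>R b))" by (rule pos)
    have "G * ((a + s *\<^sub>R b) \<bullet> (a + s *\<^sub>R b)) \<le> \<bar>G\<bar> * ((a + s *\<^sub>R b) \<bullet> (a + s *\<^sub>R b))"
      by (intro mult_right_mono) auto
    also have "\<dots> \<le> \<bar>G\<bar> * 4" using nn[OF that] by (intro mult_left_mono) auto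
    finally show "(a + s *\<^sub>R b) \<bullet> (P *v (a + s *\<^sub>R b)) \<le> 4 * \<bar>G\<bar>" using up[of "a + s *\<^sub>R b"] by linarith
  qed
  have "4 * P $ i $ j = (a + 1 *\<^sub>R b) \<bullet> (P *v (a + 1 *\<^sub>R b)) - (a + (-1) *\<^sub>R b) \<bullet> (P *v (a + (-1) *\<^sub>R b))"
    unfolding q by simp
  moreover note bd[of 1] bd[of "-1"]
  ultimately show ?thesis by auto
qed

lemma bounded_entries:
  "bounded {P::real^'n^'n. \<forall>i j. \<bar>P $ i $ j\<bar> \<le> G}"
proof -
  have "norm P \<le> real CARD('n) * (real CARD('n) * G)" if "\<forall>i j. \<bar>P $ i $ j\<bar> \<le> G" for P :: "real^'n^'n"
  proof -
    have r: "norm (P $ i) \<le> real CARD('n) * G" for i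
    proof -
      have "norm (P $ i) \<le> (\<Sum>j\<in>UNIV. \<bar>P $ i $ j\<bar>)" by (rule norm_le_l1_cart)
      also have "\<dots> \<le> (\<Sum>j\<in>(UNIV::'n set). G)" using that by (intro sum_mono) auto
      finally show ?thesis by simp
    qed
    have "norm P \<le> (\<Sum>i\<in>UNIV. \<bar>norm (P $ i)\<bar>)" unfolding norm_vec_def by (rule L2_set_le_sum_abs)
    also have "\<dots> \<le> (\<Sum>i\<in>(UNIV::'n set). real CARD('n) * G)" using r by (intro sum_mono) auto
    finally show ?thesis by simp
  qed
  thus ?thesis unfolding bounded_iff by blast
qed


lemma funpow_mpow: "((\<lambda>x. M *v x) ^^ k) x = mpow M k *v x"
proof (induction k arbitrary: x)
  case 0 thus ?case by (simp add: matrix_vector_mul_lid)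
next
  case (Suc k)
  have "((\<lambda>x. M *v x) ^^ Suc k) x = ((\<lambda>x. M *v x) ^^ k) (M *v x)" by (simp add: funpow_Suc_right del: funpow.simps)
  also have "\<dots> = mpow M (Suc k) *v x" using Suc by (simp add: matrix_vector_mul_assoc)
  finally show ?case .
qed

lemma psd_R_invertible:
  fixes R :: "real^'m^'m" and B :: "real^'m^'n"
  assumes Rpd: "\<And>z. z \<noteq> 0 \<Longrightarrow> 0 < z \<bullet> (R *v z)" and Qpos: "\<And>x. 0 \<le> x \<bullet> (Q *v x)"
  shows "invertible (R + transpose B ** Q ** B)"
proof -
  have "\<forall>z. (R + transpose B ** Q ** B) *v z = 0 \<longrightarrow> z = 0"
  proof (intro allI impI)
    fix z assume z: "(R + transpose B ** Q ** B) *v z = 0"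
    have "z \<bullet> ((R + transpose B ** Q ** B) *v z) = z \<bullet> (R *v z) + (B *v z) \<bullet> (Q *v (B *v z))"
      by (simp add: matrix_vector_mult_add_rdistrib inner_add_right matrix_vector_mul_assoc[symmetric] dot_tr dot_tr2)
    hence "z \<bullet> (R *v z) + (B *v z) \<bullet> (Q *v (B *v z)) = 0" using z by simp
    moreover have "0 \<le> (B *v z) \<bullet> (Q *v (B *v z))" by (rule Qpos)
    ultimately show "z = 0" using Rpd[of z] by force
  qed
  hence "\<exists>C. C ** (R + transpose B ** Q ** B) = Finite_Cartesian_Product.mat 1"
    using matrix_left_invertible_ker by blast
  thus ?thesis using invertible_left_inverse by blast
qed

theorem corollary1:
  fixes A :: "real^'n::finite^'n" and B :: "real^'m::finite^'n"
    and S :: "real^'n^'n" and R :: "real^'m^'m" and P0 :: "real^'n^'n"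
  assumes "pd_mat S" and "pd_mat R" and "stabilizable A B" and "psd_mat P0"
  shows "compact (closure (reach_set A B R S P0))"
proof -
  from assms(3) obtain K :: "real^'n^'m" where st: "schur_stable (A - B ** K)"
    unfolding stabilizable_def by blast
  define AK where "AK = A - B ** K"
  from stable_decay[OF st[folded AK_def]] obtain c r where
    cr: "0 < r" "r < 1" "\<And>k i j. \<bar>mpow AK k $ i $ j\<bar> \<le> c * r^k" by blast
  have Ss: "transpose S = S" using assms(1) unfolding pd_mat_def sym_mat_def by simp
  have Rs: "transpose R = R" using assms(2) unfolding pd_mat_def sym_mat_def by simp
  have Rpd: "\<And>z. z \<noteq> 0 \<Longrightarrow> 0 < z \<bullet> (R *v z)" using assms(2) unfolding pd_mat_def by simp
  have Rpsd: "0 \<le> z \<bullet> (R *v z)" for z using Rpd[of z] by (cases "z = 0") auto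
  have P0s: "transpose P0 = P0" using assms(4) unfolding psd_mat_def sym_mat_def by simp
  have P0pos: "0 \<le> x \<bullet> (P0 *v x)" for x using assms(4) unfolding psd_mat_def by simp
  define N where "N = real CARD('n)"
  define \<alpha> where "\<alpha> = N * N * \<bar>c\<bar>"
  have \<alpha>0: "0 \<le> \<alpha>" unfolding \<alpha>_def N_def by simp
  have pw: "norm (mpow AK k *v x) \<le> \<alpha> * r^k * norm x" for k x
  proof -
    have ci: "\<bar>(mpow AK k *v x) $ i\<bar> \<le> N * (\<bar>c\<bar> * r^k * norm x)" for i
    proof -
      have "\<bar>(mpow AK k *v x) $ i\<bar> = \<bar>\<Sum>j\<in>UNIV. mpow AK k $ i $ j * x $ j\<bar>"
        by (simp add: matrix_vector_mult_def)
      also have "\<dots> \<le> (\<Sum>j\<in>UNIV. \<bar>mpow AK k $ i $ j\<bar> * \<bar>x $ j\<bar>)"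
        by (rule order_trans[OF sum_abs]) (simp add: abs_mult)
      also have "\<dots> \<le> (\<Sum>j\<in>(UNIV::'n set). \<bar>c\<bar> * r^k * norm x)"
      proof (intro sum_mono mult_mono)
        fix j
        show "\<bar>mpow AK k $ i $ j\<bar> \<le> \<bar>c\<bar> * r^k" using cr(3)[of k i j] cr(1)
          by (meson abs_ge_self mult_right_mono order_trans zero_le_power less_imp_le)
        show "\<bar>x $ j\<bar> \<le> norm x" by (rule component_le_norm_cart)
      qed (use cr(1) in auto)
      finally show ?thesis unfolding N_def by simp
    qed
    have "norm (mpow AK k *v x) \<le> (\<Sum>i\<in>UNIV. \<bar>(mpow AK k *v x) $ i\<bar>)" by (rule norm_le_l1_cart)
    also have "\<dots> \<le> (\<Sum>i\<in>(UNIV::'n set). N * (\<bar>c\<bar> * r^k * norm x))" by (intro sum_mono ci)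
    also have "\<dots> = \<alpha> * r^k * norm x" unfolding \<alpha>_def N_def by simp
    finally show ?thesis .
  qed
  define g where "g = (\<lambda>x. AK *v x)"
  have gsq: "(norm ((g ^^ k) x))^2 \<le> \<alpha>^2 * (r^2)^k * (norm x)^2" for k x
  proof -
    have "norm ((g ^^ k) x) \<le> \<alpha> * r^k * norm x" unfolding g_def funpow_mpow by (rule pw)
    hence "(norm ((g ^^ k) x))^2 \<le> (\<alpha> * r^k * norm x)^2" by (intro power_mono) auto
    thus ?thesis by (simp add: power_mult_distrib power_mult[symmetric] mult.commute)
  qed
  define \<gamma>0 where "\<gamma>0 = spec_norm P0"
  define \<gamma> where "\<gamma> = spec_norm (transpose K ** R ** K) + spec_norm S + \<bar>lambda_min S\<bar>"
  have \<gamma>0: "0 \<le> \<gamma>0" unfolding \<gamma>0_def by (rule spec_norm_nonneg)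
  have \<gamma>: "0 \<le> \<gamma>" unfolding \<gamma>_def using spec_norm_nonneg[of "transpose K ** R ** K"] spec_norm_nonneg[of S] by simp
  define \<Gamma> where "\<Gamma> = \<alpha>^2 * (\<gamma>0 + \<gamma> / (1 - r^2))"
  have r2: "0 \<le> r^2" "r^2 < 1" using cr by (auto simp: power_less_one_iff)
  have main: "transpose P = P \<and> (\<forall>x. 0 \<le> x \<bullet> (P *v x)) \<and> (\<forall>x. x \<bullet> (P *v x) \<le> \<Gamma> * (x \<bullet> x))"
    if Pin: "P \<in> reach_set A B R S P0" for P
  proof -
    obtain D i where D: "\<forall>k. sym_mat (D k)" "bdd_above (range (\<lambda>k. spec_norm (D k)))"
        "(SUP k. spec_norm (D k)) < lambda_min S" and P: "P = inexact_vi A B R S P0 D i"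
      using Pin unfolding reach_set_def by blast
    define Pi where "Pi = inexact_vi A B R S P0 D"
    have Ds: "transpose (D k) = D k" for k using D(1) unfolding sym_mat_def by simp
    have Dk: "spec_norm (D k) \<le> lambda_min S" for k
      using cSUP_upper[OF UNIV_I D(2), of k] D(3) by simp
    have Dq: "\<bar>x \<bullet> (D k *v x)\<bar> \<le> lambda_min S * (x \<bullet> x)" for k x
      using quad_bound[of x "D k"] mult_right_mono[OF Dk[of k], of "x \<bullet> x"] by simp
    have Sq: "lambda_min S * (x \<bullet> x) \<le> x \<bullet> (S *v x)" for x by (rule lambda_min_le[OF Ss])
    have inv: "invertible (R + transpose B ** Q ** B)" if "\<And>x. 0 \<le> x \<bullet> (Q *v x)" for Q
      by (rule psd_R_invertible[OF Rpd that])
    have sp: "transpose (Pi k) = Pi k \<and> (\<forall>x. 0 \<le> x \<bullet> (Pi k *v x))" for k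
    proof (induction k)
      case 0 thus ?case using P0s P0pos by (simp add: Pi_def)
    next
      case (Suc k)
      hence ks: "transpose (Pi k) = Pi k" and kp: "\<And>x. 0 \<le> x \<bullet> (Pi k *v x)" by auto
      have eq: "Pi (Suc k) = riccati A B R (Pi k) S + D k" by (simp add: Pi_def)
      have "transpose (Pi (Suc k)) = Pi (Suc k)"
        unfolding eq transpose_add' using ric_sym[OF ks Ss Rs inv[OF kp]] Ds by simp
      moreover have "0 \<le> x \<bullet> (Pi (Suc k) *v x)" for x
      proof -
        define M where "M = R + transpose B ** Pi k ** B"
        define w where "w = matrix_inv M *v (transpose B *v (Pi k *v (A *v x)))"
        from ric_identity[OF ks Rs inv[OF kp], where A=A and x=x and z=w and S'=S, folded M_def, folded w_def]
        have "x \<bullet> (riccati A B R (Pi k) S *v x) = (A *v x - B *v w) \<bullet> (Pi k *v (A *v x - B *v w)) + w \<bullet> (R *v w) + x \<bullet> (S *v x)"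
          by simp
        moreover note kp[of "A *v x - B *v w"] Rpsd[of w] Sq[of x] Dq[of x k]
        ultimately show ?thesis unfolding eq by (simp add: matrix_vector_mult_add_rdistrib inner_add_right)
      qed
      ultimately show ?case by blast
    qed
    have step: "x \<bullet> (Pi (Suc k) *v x) \<le> (g x) \<bullet> (Pi k *v (g x)) + \<gamma> * (x \<bullet> x)" for k x
    proof -
      have ks: "transpose (Pi k) = Pi k" and kp: "\<And>x. 0 \<le> x \<bullet> (Pi k *v x)" using sp[of k] by auto
      have eq: "Pi (Suc k) = riccati A B R (Pi k) S + D k" by (simp add: Pi_def)
      define M where "M = R + transpose B ** Pi k ** B"
      define w where "w = matrix_inv M *v (transpose B *v (Pi k *v (A *v x)))"
      define z where "z = K *v x"
      from ric_identity[OF ks Rs inv[OF kp], where A=A and x=x and z=z and S'=S, folded M_def, folded w_def]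
      have id: "x \<bullet> (riccati A B R (Pi k) S *v x) + (z - w) \<bullet> (M *v (z - w)) = (A *v x - B *v z) \<bullet> (Pi k *v (A *v x - B *v z)) + z \<bullet> (R *v z) + x \<bullet> (S *v x)" .
      have Mpos: "0 \<le> (z - w) \<bullet> (M *v (z - w))"
        unfolding M_def using Rpsd[of "z - w"] kp[of "B *v (z - w)"]
        by (simp add: matrix_vector_mult_add_rdistrib inner_add_right matrix_vector_mul_assoc[symmetric] dot_tr dot_tr2)
      have gx: "A *v x - B *v z = g x" unfolding g_def AK_def z_def
        by (simp add: matrix_vector_mult_diff_rdistrib matrix_vector_mul_assoc)
      have zR: "z \<bullet> (R *v z) = x \<bullet> ((transpose K ** R ** K) *v x)" unfolding z_def
        by (simp add: matrix_vector_mul_assoc[symmetric] dot_tr dot_tr2)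
      have b1: "x \<bullet> ((transpose K ** R ** K) *v x) \<le> spec_norm (transpose K ** R ** K) * (x \<bullet> x)"
        using quad_bound[of x "transpose K ** R ** K"] by simp
      have b2: "x \<bullet> (S *v x) \<le> spec_norm S * (x \<bullet> x)" using quad_bound[of x S] by simp
      have b3: "x \<bullet> (D k *v x) \<le> \<bar>lambda_min S\<bar> * (x \<bullet> x)"
      proof -
        have "lambda_min S * (x \<bullet> x) \<le> \<bar>lambda_min S\<bar> * (x \<bullet> x)"
          by (rule mult_right_mono[OF abs_ge_self inner_ge_zero])
        thus ?thesis using Dq[of x k] by linarith
      qed
      have "x \<bullet> (Pi (Suc k) *v x) = x \<bullet> (riccati A B R (Pi k) S *v x) + x \<bullet> (D k *v x)"
        unfolding eq by (simp add: matrix_vector_mult_add_rdistrib inner_add_right)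
      thus ?thesis using id Mpos gx zR b1 b2 b3 unfolding \<gamma>_def by (simp add: algebra_simps)
    qed
    have iter: "x \<bullet> (Pi k *v x) \<le> \<gamma>0 * (norm ((g ^^ k) x))^2 + \<gamma> * (\<Sum>j<k. (norm ((g ^^ j) x))^2)" for k x
    proof (induction k arbitrary: x)
      case 0
      have "x \<bullet> (P0 *v x) \<le> \<gamma>0 * (x \<bullet> x)" using quad_bound[of x P0] unfolding \<gamma>0_def by simp
      thus ?case by (simp add: Pi_def power2_norm_eq_inner)
    next
      case (Suc k)
      have "x \<bullet> (Pi (Suc k) *v x) \<le> (g x) \<bullet> (Pi k *v (g x)) + \<gamma> * (x \<bullet> x)" by (rule step)
      also have "\<dots> \<le> \<gamma>0 * (norm ((g ^^ k) (g x)))^2 + \<gamma> * (\<Sum>j<k. (norm ((g ^^ j) (g x)))^2) + \<gamma> * (x \<bullet> x)"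
        using Suc by simp
      also have "\<dots> = \<gamma>0 * (norm ((g ^^ Suc k) x))^2 + \<gamma> * (\<Sum>j<Suc k. (norm ((g ^^ j) x))^2)"
      proof -
        have gs: "(g ^^ Suc j) x = (g ^^ j) (g x)" for j by (simp add: funpow_Suc_right del: funpow.simps)
        have "(\<Sum>j<Suc k. (norm ((g ^^ j) x))^2) = (norm ((g ^^ 0) x))^2 + (\<Sum>j<k. (norm ((g ^^ Suc j) x))^2)"
          by (rule sum.lessThan_Suc_shift)
        also have "\<dots> = x \<bullet> x + (\<Sum>j<k. (norm ((g ^^ j) (g x)))^2)" unfolding gs by (simp add: power2_norm_eq_inner)
        finally show ?thesis unfolding gs by (simp add: algebra_simps)
      qed
      finally show ?case .
    qed
    have bnd: "x \<bullet> (Pi k *v x) \<le> \<Gamma> * (x \<bullet> x)" for k x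
    proof -
      have t1: "\<gamma>0 * (norm ((g ^^ k) x))^2 \<le> \<gamma>0 * (\<alpha>^2 * (norm x)^2)"
      proof -
        have "(norm ((g ^^ k) x))^2 \<le> \<alpha>^2 * (r^2)^k * (norm x)^2" by (rule gsq)
        also have "\<dots> \<le> \<alpha>^2 * 1 * (norm x)^2"
          using r2 cr by (intro mult_right_mono mult_left_mono power_le_one) auto
        finally show ?thesis using \<gamma>0 by (intro mult_left_mono) auto
      qed
      have t2: "(\<Sum>j<k. (norm ((g ^^ j) x))^2) \<le> \<alpha>^2 * (norm x)^2 / (1 - r^2)"
      proof -
        have "(\<Sum>j<k. (norm ((g ^^ j) x))^2) \<le> (\<Sum>j<k. \<alpha>^2 * (norm x)^2 * (r^2)^j)"
          using gsq by (intro sum_mono) (simp add: algebra_simps)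
        also have "\<dots> = \<alpha>^2 * (norm x)^2 * (\<Sum>j<k. (r^2)^j)" by (simp add: sum_distrib_left)
        also have "(\<Sum>j<k. (r^2)^j) = (1 - (r^2)^k) / (1 - r^2)" using r2 by (simp add: sum_gp_strict)
        also have "\<dots> \<le> 1 / (1 - r^2)" using r2 by (intro divide_right_mono) auto
        finally show ?thesis by (simp add: mult_left_mono)
      qed
      have "x \<bullet> (Pi k *v x) \<le> \<gamma>0 * (\<alpha>^2 * (norm x)^2) + \<gamma> * (\<alpha>^2 * (norm x)^2 / (1 - r^2))"
        using iter[where k=k and x=x] t1 mult_left_mono[OF t2 \<gamma>] by linarith
      also have "\<dots> = \<Gamma> * (x \<bullet> x)" unfolding \<Gamma>_def by (simp add: power2_norm_eq_inner algebra_simps)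
      finally show ?thesis .
    qed
    show ?thesis using sp[of i] bnd[where k=i] unfolding P Pi_def by blast
  qed
  have "reach_set A B R S P0 \<subseteq> {P::real^'n^'n. \<forall>i j. \<bar>P $ i $ j\<bar> \<le> \<bar>\<Gamma>\<bar>}"
  proof (intro subsetI CollectI allI)
    fix P i j assume "P \<in> reach_set A B R S P0"
    from main[OF this] show "\<bar>P $ i $ j\<bar> \<le> \<bar>\<Gamma>\<bar>" by (intro entry_bound) auto
  qed
  hence "bounded (reach_set A B R S P0)" using bounded_entries bounded_subset by blast
  thus ?thesis by (simp add: compact_eq_bounded_closed bounded_closure)
qed

end
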